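(* Assume $\mathrm{char}\,K\ne2$, $\prod_{i=1}^{n-1}(1+q^i)=0$, and $\mathcal H(D_n)$ is split over $K$, so that $q$ is a primitive $2\ell$-th root of unity with $1\le\ell<n$. Let $\lambda\in\mathcal P_n$ with $h(\lambda)=\lambda$. Then $n$ is even. Moreover, if $\underline\emptyset\xrightarrow{i_1}\cdot\xrightarrow{i_2}\cdots\xrightarrow{i_n}\lambda$ is a path in Kleshchev's good lattice, then for every $k\in\mathbb Z$, $$\#\{j: i_j\equiv k \bmod 2\ell\}=\#\{j: i_j\equiv k+\ell\bmod 2\ell\}.$$
   Context: $K$ is a field, $q\in K^\times$. $\mathcal H(B_n)$ is the $K$-algebra with generators $T_0,\dots,T_{n-1}$ and relations $T_0^2=1$; $(T_i+1)(T_i-q)=0$ for $1\le i\le n-1$; $T_0T_1T_0T_1=T_1T_0T_1T_0$; $T_iT_{i+1}T_i=T_{i+1}T_iT_{i+1}$ for $1\le i\le n-2$; $T_iT_j=T_jT_i$ for $|i-j|>1$; $\mathcal H(D_n)$ is the subalgebra generated by $T_0T_1T_0,T_1,\dots,T_{n-1}$. For a bipartition $\lambda$ of $n$, $\tilde D^\lambda$ is the simple head of the Dipper–James–Mathas Specht module $\tilde S^\lambda$, and $\mathcal P_n=\{\lambda:\tilde D^\lambda\neq0\}$; when $q$ is a primitive $2\ell$-th root of unity, $\mathcal P_n$ is the set of Kleshchev bipartitions of $n$ with respect to the parameters $(q;1,-1)$. Nodes of bipartitions carry residues in $\mathbb Z/2\ell\mathbb Z$ and "$2\ell$-good nodes"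 are as in Ariki–Mathas for the Ariki–Koike parameters $(q;Q_1=1,Q_2=-1)$. Kleshchev's good lattice is the graph on Kleshchev bipartitions with an arrow $\mu\xrightarrow{x}\lambda$ when $\lambda$ is obtained from $\mu$ by adding a $2\ell$-good node of residue $x$; $\underline\emptyset=(\emptyset,\emptyset)$. Let $\sigma$ be the automorphism of $\mathcal H(B_n)$ with $\sigma(T_0)=-T_0$, $\sigma(T_i)=T_i$ ($i\ne0$); $h$ is the involution of $\mathcal P_n$ with $(\tilde D^\lambda)^\sigma\cong\tilde D^{h(\lambda)}$. Known fact: if $\underline\emptyset\xrightarrow{i_1}\cdots\xrightarrow{i_n}\lambda$ is a path in the good lattice, then $\underline\emptyset\xrightarrow{i_1+\ell}\cdots\xrightarrow{i_n+\ell}h(\lambda)$ is also a path. *)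

theory Defs
  imports Main
begin

text \<open>Nodes of a bipartition: (k, r, c) with component k \<in> {0,1} (0 = first,
  1 = second component), row r and column c, both counted from 0.
  A bipartition is a finite set of such nodes closed under moving up/left
  inside its component (a pair of Young diagrams).\<close>

type_synonym node = "nat \<times> nat \<times> nat"

definition bipartition :: "node set \<Rightarrow> bool" where
  "bipartition Y \<longleftrightarrow> finite Y \<and> (\<forall>(k,r,c)\<in>Y. k < 2) \<and>
     (\<forall>k r c r' c'. (k,r,c) \<in> Y \<longrightarrow> r' \<le> r \<longrightarrow> c' \<le> c \<longrightarrow> (k,r',c') \<in> Y)"

text \<open>Residue in Z/2lZ (represented in [0,2l)) for Ariki--Koike parameters
  (q; Q1 = 1 = q^0, Q2 = -1 = q^l), q a primitive 2l-th root of unity: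
  the node (k,r,c) has residue Q_k q^(c-r), i.e. c - r (+ l if in the second component).\<close>

definition res :: "nat \<Rightarrow> node \<Rightarrow> int" where
  "res l \<gamma> = (case \<gamma> of (k,r,c) \<Rightarrow>
      (int c - int r + (if k = 0 then 0 else int l)) mod (2 * int l))"

definition addable :: "node set \<Rightarrow> node \<Rightarrow> bool" where
  "addable Y \<gamma> \<longleftrightarrow> \<gamma> \<notin> Y \<and> bipartition (insert \<gamma> Y)"

definition removable :: "node set \<Rightarrow> node \<Rightarrow> bool" where
  "removable Y \<gamma> \<longleftrightarrow> \<gamma> \<in> Y \<and> bipartition (Y - {\<gamma>})"

definition below :: "node \<Rightarrow> node \<Rightarrow> bool" where
  "below \<gamma> \<gamma>' \<longleftrightarrow> (case \<gamma> of (k,r,c) \<Rightarrow> case \<gamma>' of (k',r',c') \<Rightarrow>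
      k > k' \<or> (k = k' \<and> r > r'))"

definition normal_node :: "nat \<Rightarrow> node set \<Rightarrow> node \<Rightarrow> bool" where
  "normal_node l Y \<gamma> \<longleftrightarrow> removable Y \<gamma> \<and>
     (\<forall>\<eta>. addable Y \<eta> \<and> res l \<eta> = res l \<gamma> \<and> below \<eta> \<gamma> \<longrightarrow>
        card {\<delta>. addable Y \<delta> \<and> res l \<delta> = res l \<gamma> \<and> below \<eta> \<delta> \<and> below \<delta> \<gamma>}
      < card {\<delta>. removable Y \<delta> \<and> res l \<delta> = res l \<gamma> \<and> below \<eta> \<delta> \<and> below \<delta> \<gamma>})"

definition good_node :: "nat \<Rightarrow> node set \<Rightarrow> node \<Rightarrow> bool" where
  "good_node l Y \<gamma> \<longleftrightarrow> normal_node l Y \<gamma> \<and>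
     \<not> (\<exists>\<gamma>'. normal_node l Y \<gamma>' \<and> res l \<gamma>' = res l \<gamma> \<and> below \<gamma> \<gamma>')"

definition good_arrow :: "nat \<Rightarrow> node set \<Rightarrow> int \<Rightarrow> node set \<Rightarrow> bool" where
  "good_arrow l \<mu> x lam \<longleftrightarrow> bipartition \<mu> \<and>
     (\<exists>\<gamma>. \<gamma> \<notin> \<mu> \<and> lam = insert \<gamma> \<mu> \<and> bipartition lam \<and> good_node l lam \<gamma> \<and>
          res l \<gamma> = x mod (2 * int l))"

definition good_path :: "nat \<Rightarrow> nat \<Rightarrow> (nat \<Rightarrow> int) \<Rightarrow> node set \<Rightarrow> bool" where
  "good_path l n i lam \<longleftrightarrow> (\<exists>\<Lambda> :: nat \<Rightarrow> node set. \<Lambda> 0 = {} \<and> \<Lambda> n = lam \<and>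
      (\<forall>j<n. good_arrow l (\<Lambda> j) (i (Suc j)) (\<Lambda> (Suc j))))"

text \<open>Kleshchev bipartitions of n (for parameters (q;1,-1), q primitive 2l-th root
  of unity): those reachable from the empty bipartition in the good lattice.
  By the context, these form the set P_n.\<close>

definition kleshchev :: "nat \<Rightarrow> nat \<Rightarrow> node set \<Rightarrow> bool" where
  "kleshchev l n lam \<longleftrightarrow> (\<exists>i. good_path l n i lam)"

end

theory Submission
  imports Defs
begin

lemma mod_shift_iff:
  fixes a b c m :: int
  shows "((a + c) mod m = (b + c) mod m) \<longleftrightarrow> (a mod m = b mod m)"
  by (simp add: mod_eq_dvd_iff)

lemma path_content:
  assumes "good_path l n i lam"
  shows "finite lam \<and> (\<forall>x. card {g \<in> lam. res l g = x mod (2 * int l)}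
          = card {j \<in> {1..n}. i j mod (2 * int l) = x mod (2 * int l)})"
proof -
  obtain L where L0: "L 0 = {}" and Ln: "L n = lam"
    and Ls: "\<forall>j<n. good_arrow l (L j) (i (Suc j)) (L (Suc j))"
    using assms unfolding good_path_def by blast
  have "\<forall>m\<le>n. finite (L m) \<and> (\<forall>x. card {g \<in> L m. res l g = x mod (2 * int l)}
          = card {j \<in> {1..m}. i j mod (2 * int l) = x mod (2 * int l)})"
  proof (intro allI impI)
    fix m assume "m \<le> n"
    then show "finite (L m) \<and> (\<forall>x. card {g \<in> L m. res l g = x mod (2 * int l)}
          = card {j \<in> {1..m}. i j mod (2 * int l) = x mod (2 * int l)})"
    proof (induction m)
      case 0
      then show ?case using L0 by simp
    next
      case (Suc m)
      then have IH: "finite (L m)" "\<And>x. card {g \<in> L m. res l g = x mod (2 * int l)}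
          = card {j \<in> {1..m}. i j mod (2 * int l) = x mod (2 * int l)}" by auto
      from Suc.prems Ls have "good_arrow l (L m) (i (Suc m)) (L (Suc m))" by auto
      then obtain g where g: "g \<notin> L m" "L (Suc m) = insert g (L m)"
        "res l g = i (Suc m) mod (2 * int l)"
        unfolding good_arrow_def by blast
      have fin: "finite (L (Suc m))" using g IH by simp
      have "card {g' \<in> L (Suc m). res l g' = x mod (2 * int l)}
          = card {j \<in> {1..Suc m}. i j mod (2 * int l) = x mod (2 * int l)}" for x
      proof (cases "i (Suc m) mod (2 * int l) = x mod (2 * int l)")
        case True
        have e1: "{g' \<in> L (Suc m). res l g' = x mod (2 * int l)}
           = insert g {g' \<in> L m. res l g' = x mod (2 * int l)}" using g True by auto
        have e2: "{j \<in> {1..Suc m}. i j mod (2 * int l) = x mod (2 * int l)}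
           = insert (Suc m) {j \<in> {1..m}. i j mod (2 * int l) = x mod (2 * int l)}"
          using True by (auto simp: le_Suc_eq)
        show ?thesis unfolding e1 e2 using IH g by simp
      next
        case False
        have e1: "{g' \<in> L (Suc m). res l g' = x mod (2 * int l)}
           = {g' \<in> L m. res l g' = x mod (2 * int l)}" using g False by auto
        have e2: "{j \<in> {1..Suc m}. i j mod (2 * int l) = x mod (2 * int l)}
           = {j \<in> {1..m}. i j mod (2 * int l) = x mod (2 * int l)}"
          using False by (auto simp: le_Suc_eq)
        show ?thesis unfolding e1 e2 using IH by simp
      qed
      then show ?case using fin by blast
    qed
  qed
  then show ?thesis using Ln by auto
qed

lemma balanced:
  assumes "good_path l n i lam" "good_path l n (\<lambda>j. i j + int l) lam"
  shows "card {j \<in> {1..n}. i j mod (2 * int l) = k mod (2 * int l)}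
       = card {j \<in> {1..n}. i j mod (2 * int l) = (k + int l) mod (2 * int l)}"
proof -
  have "card {j \<in> {1..n}. i j mod (2 * int l) = (k + int l) mod (2 * int l)}
      = card {j \<in> {1..n}. (i j + int l) mod (2 * int l) = (k + int l) mod (2 * int l)}"
  proof -
    have a: "card {g \<in> lam. res l g = (k + int l) mod (2 * int l)}
          = card {j \<in> {1..n}. i j mod (2 * int l) = (k + int l) mod (2 * int l)}"
      using path_content[OF assms(1)] by blast
    have b: "card {g \<in> lam. res l g = (k + int l) mod (2 * int l)}
          = card {j \<in> {1..n}. (i j + int l) mod (2 * int l) = (k + int l) mod (2 * int l)}"
      using path_content[OF assms(2)] by blast
    show ?thesis using a b by simp
  qed
  also have "\<dots> = card {j \<in> {1..n}. i j mod (2 * int l) = k mod (2 * int l)}"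
    by (simp only: mod_shift_iff)
  finally show ?thesis by simp
qed

theorem lemma3p3:
  fixes q :: "'a::field" and n l :: nat
    and h :: "node set \<Rightarrow> node set" and lam :: "node set"
  assumes char_ne_2: "(2::'a) \<noteq> 0"
    and prod_zero: "(\<Prod>i\<in>{1..n-1}. 1 + q ^ i) = 0"
    and q_prim: "q ^ (2 * l) = 1" "\<forall>m. 0 < m \<and> m < 2 * l \<longrightarrow> q ^ m \<noteq> 1"
    and l_range: "1 \<le> l" "l < n"
    and h_invol: "\<forall>\<mu>. kleshchev l n \<mu> \<longrightarrow> kleshchev l n (h \<mu>) \<and> h (h \<mu>) = \<mu>"
    and h_path: "\<forall>\<mu> i. good_path l n i \<mu> \<longrightarrow> good_path l n (\<lambda>j. i j + int l) (h \<mu>)"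
    and lam: "kleshchev l n lam"
    and fixed: "h lam = lam"
  shows "even n \<and>
    (\<forall>i. good_path l n i lam \<longrightarrow>
       (\<forall>k::int. card {j \<in> {1..n}. i j mod (2 * int l) = k mod (2 * int l)}
               = card {j \<in> {1..n}. i j mod (2 * int l) = (k + int l) mod (2 * int l)}))"
proof -
  have bal: "card {j \<in> {1..n}. i j mod (2 * int l) = k mod (2 * int l)}
               = card {j \<in> {1..n}. i j mod (2 * int l) = (k + int l) mod (2 * int l)}"
    if "good_path l n i lam" for i k
  proof -
    have "good_path l n (\<lambda>j. i j + int l) (h lam)" using h_path that by blast
    then have "good_path l n (\<lambda>j. i j + int l) lam" using fixed by simp
    then show ?thesis using balanced[OF that] by blast
  qed
  obtain i where ip: "good_path l n i lam" using lam unfolding kleshchev_def by blast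
  define M where "M = 2 * int l"
  define c where "c r = card {j \<in> {1..n}. i j mod M = r}" for r
  have Mpos: "M > 0" using l_range by (simp add: M_def)
  have "card (\<Union>r\<in>{0..<M}. {j \<in> {1..n}. i j mod M = r}) = (\<Sum>r\<in>{0..<M}. c r)"
    unfolding c_def by (rule card_UN_disjoint) auto
  moreover have "(\<Union>r\<in>{0..<M}. {j \<in> {1..n}. i j mod M = r}) = {1..n}"
    using Mpos by auto
  ultimately have nsum: "n = (\<Sum>r\<in>{0..<M}. c r)" by simp
  have split: "{0..<M} = {0..<int l} \<union> {int l..<M}" using M_def by auto
  have img: "{int l..<M} = (\<lambda>r. r + int l) ` {0..<int l}"
  proof -
    have "(\<lambda>r. r + int l) ` {0..<int l} = {int l..<int l + int l}"
      by (simp add: image_add_atLeastLessThan')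
    then show ?thesis by (simp add: M_def)
  qed
  have ceq: "c (r + int l) = c r" if "r \<in> {0..<int l}" for r
  proof -
    have "r mod M = r" "(r + int l) mod M = r + int l" using that M_def by auto
    then show ?thesis using bal[OF ip, of r] unfolding c_def M_def by simp
  qed
  have "(\<Sum>r\<in>{0..<M}. c r) = (\<Sum>r\<in>{0..<int l}. c r) + (\<Sum>r\<in>{int l..<M}. c r)"
    unfolding split by (rule sum.union_disjoint) auto
  also have "(\<Sum>r\<in>{int l..<M}. c r) = (\<Sum>r\<in>{0..<int l}. c (r + int l))"
    unfolding img by (subst sum.reindex) (auto simp: inj_on_def)
  also have "\<dots> = (\<Sum>r\<in>{0..<int l}. c r)" using ceq by (rule sum.cong[OF refl])
  finally have "n = 2 * (\<Sum>r\<in>{0..<int l}. c r)" using nsum by simp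
  then have "even n" by simp
  then show ?thesis using bal by blast
qed

end
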